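(* Let $\kappa$ be a regular infinite cardinal and $\mu$ a singular cardinal with $\mathrm{cf}(\mu)=\kappa$. (1) (a) $\mu^{<\kappa}\le\mathrm{non}(\mathcal M_\kappa({}^{\kappa}\mu,\kappa))$; (b) $2^{<\mu}\le\mathrm{non}(\mathcal M_\kappa({}^{\mu}2,\mu))$; (c) $\mu^{<\mu}\le\min\{\mathrm{non}(\mathcal M_\kappa({}^{\mu}\mu,\mathrm{bd})),\mathrm{non}(\mathcal M_\kappa({}^{\mu}\mu,\mu))\}$. (2) (a) $\mathrm{non}(\mathcal M_\kappa({}^{\kappa}\kappa,\kappa))\le\mathrm{non}(\mathcal M_\kappa({}^{\kappa}\mu,\kappa))$; (b) $\mathrm{non}(\mathcal M_\kappa({}^{\kappa}\mu,\kappa))\le\mathrm{non}(\mathcal M_\kappa({}^{\mu}\mu,\mathrm{bd}))$; (c) $\mathrm{non}(\mathcal M_\kappa({}^{\kappa}\mu,\kappa))\le\mathrm{non}(\mathcal M_\kappa({}^{\mu}\mu,\kappa))$; (d) $\mathrm{non}(\mathcal M_\kappa({}^{\mu}2,\mu))\le\mathrm{non}(\mathcal M_\kappa({}^{\mu}\mu,\mu))$; (e) $\mathrm{non}(\mathcal M_\kappa({}^{\kappa}\kappa,\kappa))\le\mathrm{non}(\mathcal M_\kappa({}^{\mu}\kappa,\kappa))$; (f) $\mathrm{non}(\mathcal M_\kappa({}^{\mu}\kappa,\kappa))\le\mathrm{non}(\mathcal M_\kappa({}^{\mu}\mu,\kappa))$. (3) $\mathrm{cf}([\mu]^{\kappa})\le\min\{\mathrm{non}(\mathcal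 M_\kappa({}^{\kappa}\mu,\kappa)),\mathrm{non}(\mathcal M_\kappa({}^{\mu}2,\mu))\}$.
   Context: For ordinals $\delta,\rho$, ${}^{\delta}\rho$ is the set of functions $\delta\to\rho$; for a partial function $s\colon\delta\rightharpoonup\rho$, $[s]=\{f\in{}^{\delta}\rho: s\subseteq f\}$. Topologies on ${}^{\delta}\rho$: ${<}\kappa$-box (base $[s]$, $|\mathrm{dom}(s)|<\kappa$), denoted $\kappa$; ${<}\mu$-box (base $[s]$, $|\mathrm{dom}(s)|<\mu$), denoted $\mu$; bounded (base $[s]$, $s\in{}^{\alpha}\rho$, $\alpha<\delta$), denoted $\mathrm{bd}$. (On ${}^{\kappa}\mu$ the bounded and ${<}\kappa$-box topologies coincide.) A set is $\kappa$-meagre if it is a union of at most $\kappa$ nowhere dense sets; $\mathcal M_\kappa(X,\tau)$ is the ideal of $\kappa$-meagre subsets; $\mathrm{non}(\mathcal I)$ is the least size of a subset of the space not in $\mathcal I$. $\mathrm{cf}([\mu]^{\kappa})$ is the least size of a family $\mathcal F\subseteq[\mu]^{\le\kappa}$ such that every subset of $\mu$ of size $\le\kappa$ is contained in some member of $\mathcal F$. *)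

theory Defs
  imports "HOL-Analysis.Analysis"
begin

unbundle cardinal_syntax

text \<open>Cardinals/ordinals are represented by well-order relations (HOL's BNF cardinal
library): an ordinal delta is a well-order, its underlying set is Field delta; a cardinal is
a Card_order.  The function space of functions from D to R is Func D R (functions that are
undefined outside D).\<close>

text \<open>The basic clopen set [s] for the partial function s = g restricted to A.\<close>
definition cyl :: "'d set \<Rightarrow> 'r set \<Rightarrow> 'd set \<Rightarrow> ('d \<Rightarrow> 'r) \<Rightarrow> ('d \<Rightarrow> 'r) set" where
  "cyl D R A g = {f \<in> Func D R. \<forall>x\<in>A. f x = g x}"

definition box_top :: "'d set \<Rightarrow> 'r set \<Rightarrow> 'c rel \<Rightarrow> ('d \<Rightarrow> 'r) topology" where
  "box_top D R lam = topology_generated_by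
     {cyl D R A g | A g. A \<subseteq> D \<and> (card_of A) <o lam \<and> g ` A \<subseteq> R}"

definition bd_top :: "'d rel \<Rightarrow> 'r set \<Rightarrow> ('d \<Rightarrow> 'r) topology" where
  "bd_top delta R = topology_generated_by
     {cyl (Field delta) R (underS delta a) g | a g. a \<in> Field delta \<and> g ` underS delta a \<subseteq> R}"

definition nowhere_densein :: "'a topology \<Rightarrow> 'a set \<Rightarrow> bool" where
  "nowhere_densein T S \<longleftrightarrow> S \<subseteq> topspace T \<and> T interior_of (T closure_of S) = {}"

definition kmeagre :: "'c rel \<Rightarrow> 'a topology \<Rightarrow> 'a set \<Rightarrow> bool" where
  "kmeagre kappa T Y \<longleftrightarrow> Y \<subseteq> topspace T \<and>
     (\<exists>N. (card_of N) <=o kappa \<and> (\<forall>S\<in>N. nowhere_densein T S) \<and> Y \<subseteq> \<Union>N)"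

text \<open>non(M_kappa(T)) \<le> non(M_kappa(T')) : every non-meagre set of T' has a non-meagre set of T
 of at most its size.\<close>
definition non_le_non :: "'c rel \<Rightarrow> 'a topology \<Rightarrow> 'b topology \<Rightarrow> bool" where
  "non_le_non kappa T T' \<longleftrightarrow>
     (\<forall>Y'. Y' \<subseteq> topspace T' \<and> \<not> kmeagre kappa T' Y' \<longrightarrow>
        (\<exists>Y. Y \<subseteq> topspace T \<and> \<not> kmeagre kappa T Y \<and> (card_of Y) <=o (card_of Y')))"

text \<open>rho^{<lam} \<le> (card_of Z), where rho^{<lam} = sup of rho^nu over cardinals nu < lam.\<close>
definition pow_less_le :: "'r set \<Rightarrow> 'd rel \<Rightarrow> 'z set \<Rightarrow> bool" where
  "pow_less_le R lam Z \<longleftrightarrow> (\<forall>A. A \<subseteq> Field lam \<and> (card_of A) <o lam \<longrightarrow> (card_of (Func A R)) <=o (card_of Z))"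

text \<open>rho^{<lam} \<le> non(M_kappa(T)).\<close>
definition pow_less_le_non :: "'r set \<Rightarrow> 'd rel \<Rightarrow> 'c rel \<Rightarrow> 'a topology \<Rightarrow> bool" where
  "pow_less_le_non R lam kappa T \<longleftrightarrow>
     (\<forall>Y. Y \<subseteq> topspace T \<and> \<not> kmeagre kappa T Y \<longrightarrow> pow_less_le R lam Y)"

text \<open>cf([mu]^kappa) \<le> (card_of Z).\<close>
definition cf_bracket_le :: "'m rel \<Rightarrow> 'k rel \<Rightarrow> 'z set \<Rightarrow> bool" where
  "cf_bracket_le mu kappa Z \<longleftrightarrow>
     (\<exists>F. F \<subseteq> {B. B \<subseteq> Field mu \<and> (card_of B) <=o kappa} \<and>
          (\<forall>B. B \<subseteq> Field mu \<and> (card_of B) <=o kappa \<longrightarrow> (\<exists>C\<in>F. B \<subseteq> C)) \<and> (card_of F) <=o (card_of Z))"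

text \<open>cf([mu]^kappa) \<le> non(M_kappa(T)).\<close>
definition cf_bracket_le_non :: "'m rel \<Rightarrow> 'k rel \<Rightarrow> 'a topology \<Rightarrow> bool" where
  "cf_bracket_le_non mu kappa T \<longleftrightarrow>
     (\<forall>Y. Y \<subseteq> topspace T \<and> \<not> kmeagre kappa T Y \<longrightarrow> cf_bracket_le mu kappa Y)"

definition cofinality_is :: "'m rel \<Rightarrow> 'k rel \<Rightarrow> bool" where
  "cofinality_is mu kappa \<longleftrightarrow>
     (\<exists>K. K \<subseteq> Field mu \<and> cofinal K mu \<and> (card_of K) =o kappa) \<and>
     (\<forall>K. K \<subseteq> Field mu \<and> cofinal K mu \<longrightarrow> kappa <=o (card_of K))"

end

theory Submission
  imports Defs
begin

definition cyltop :: "'d set \<Rightarrow> 'r set \<Rightarrow> 'd set set \<Rightarrow> ('d \<Rightarrow> 'r) topology" where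
  "cyltop D R AA = topology_generated_by {cyl D R A g | A g. A \<in> AA \<and> g ` A \<subseteq> R}"

definition goodfam :: "'d set \<Rightarrow> 'd set set \<Rightarrow> bool" where
  "goodfam D AA \<longleftrightarrow> AA \<noteq> {} \<and> (\<forall>A\<in>AA. A \<subseteq> D) \<and> (\<forall>A1\<in>AA. \<forall>A2\<in>AA. \<exists>A3\<in>AA. A1 \<union> A2 \<subseteq> A3)"

lemma goodfam_sub: "goodfam D AA \<Longrightarrow> A \<in> AA \<Longrightarrow> A \<subseteq> D"
  unfolding goodfam_def by simp

lemma goodfam_ne: assumes "goodfam D AA" shows "\<exists>A. A \<in> AA"
proof -
  have "AA \<noteq> {}" using assms unfolding goodfam_def by simp
  then show ?thesis by blast
qed

lemma goodfam_dir: "goodfam D AA \<Longrightarrow> A1 \<in> AA \<Longrightarrow> A2 \<in> AA \<Longrightarrow> \<exists>A3. A3 \<in> AA \<and> A1 \<subseteq> A3 \<and> A2 \<subseteq> A3"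
  unfolding goodfam_def by (metis Un_subset_iff)

lemma box_top_cyltop: "box_top D R lam = cyltop D R {A. A \<subseteq> D \<and> |A| <o lam}"
  unfolding box_top_def cyltop_def by (rule arg_cong[where f=topology_generated_by]) auto

lemma bd_top_cyltop: "bd_top delta R = cyltop (Field delta) R {underS delta a | a. a \<in> Field delta}"
  unfolding bd_top_def cyltop_def by (rule arg_cong[where f=topology_generated_by]) blast

lemma cyl_sub_Func: "cyl D R A g \<subseteq> Func D R"
  unfolding cyl_def by auto

lemma self_in_cyl: "f \<in> Func D R \<Longrightarrow> f \<in> cyl D R A f"
  unfolding cyl_def by auto

lemma cyl_mono: "A \<subseteq> A' \<Longrightarrow> f' \<in> cyl D R A f \<Longrightarrow> cyl D R A' f' \<subseteq> cyl D R A f"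
  unfolding cyl_def by auto

lemma cyl_eq: "f \<in> cyl D R A g \<Longrightarrow> cyl D R A f = cyl D R A g"
  unfolding cyl_def by auto

lemma topspace_cyltop:
  assumes "goodfam D AA" shows "topspace (cyltop D R AA) = Func D R"
proof -
  obtain A0 where A0: "A0 \<in> AA" using goodfam_ne[OF assms] by blast
  then have "A0 \<subseteq> D" using goodfam_sub[OF assms] by blast
  have "Func D R \<subseteq> \<Union>{cyl D R A g | A g. A \<in> AA \<and> g ` A \<subseteq> R}"
  proof
    fix f assume f: "f \<in> Func D R"
    have "f ` A0 \<subseteq> R" using f \<open>A0 \<subseteq> D\<close> unfolding Func_def by auto
    then show "f \<in> \<Union>{cyl D R A g | A g. A \<in> AA \<and> g ` A \<subseteq> R}"
      using A0 self_in_cyl[OF f, of A0] by blast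
  qed
  moreover have "\<Union>{cyl D R A g | A g. A \<in> AA \<and> g ` A \<subseteq> R} \<subseteq> Func D R"
    using cyl_sub_Func by blast
  ultimately show ?thesis unfolding cyltop_def topology_generated_by_topspace by (rule equalityI[rotated])
qed

lemma open_cyl:
  assumes "goodfam D AA" "A \<in> AA" "f \<in> Func D R"
  shows "openin (cyltop D R AA) (cyl D R A f)"
proof -
  have "A \<subseteq> D" using goodfam_sub assms(1,2) by blast
  then have "f ` A \<subseteq> R" using assms(3) unfolding Func_def by auto
  then show ?thesis unfolding cyltop_def using assms(2)
    by (intro topology_generated_by_Basis) blast
qed

lemma nbhd_cyl_aux:
  assumes g: "goodfam D AA"
  shows "generate_topology_on {cyl D R A g | A g. A \<in> AA \<and> g ` A \<subseteq> R} U \<Longrightarrow> \<forall>f\<in>U. \<exists>A\<in>AA. cyl D R A f \<subseteq> U"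
proof (induct rule: generate_topology_on.induct)
  case Empty then show ?case by simp
next
  case (Int a b)
  show ?case
  proof
    fix f assume "f \<in> a \<inter> b"
    then obtain A1 A2 where A12: "A1 \<in> AA" "cyl D R A1 f \<subseteq> a" "A2 \<in> AA" "cyl D R A2 f \<subseteq> b" using Int by blast
    obtain A3 where A3: "A3 \<in> AA" "A1 \<union> A2 \<subseteq> A3" using goodfam_dir[OF g A12(1,3)] by blast
    have "cyl D R A3 f \<subseteq> cyl D R A1 f" "cyl D R A3 f \<subseteq> cyl D R A2 f"
      using A3(2) unfolding cyl_def by auto
    then show "\<exists>A\<in>AA. cyl D R A f \<subseteq> a \<inter> b" using A12 A3(1) by blast
  qed
next
  case (UN K)
  show ?case
  proof
    fix f assume "f \<in> \<Union>K"
    then obtain k where "k \<in> K" "f \<in> k" by blast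
    then show "\<exists>A\<in>AA. cyl D R A f \<subseteq> \<Union>K" using UN by blast
  qed
next
  case (Basis s)
  then obtain A g where "s = cyl D R A g" "A \<in> AA" by blast
  then show ?case using cyl_eq by blast
qed

lemma nbhd_cyl:
  assumes "goodfam D AA" "openin (cyltop D R AA) U" "f \<in> U"
  shows "\<exists>A\<in>AA. cyl D R A f \<subseteq> U"
proof -
  have "generate_topology_on {cyl D R A g | A g. A \<in> AA \<and> g ` A \<subseteq> R} U"
    using assms(2) unfolding cyltop_def by (rule openin_topology_generated_by)
  then show ?thesis using assms(3) nbhd_cyl_aux[OF assms(1)] by blast
qed

lemma ND_intro:
  assumes "S \<subseteq> topspace T"
    and "\<And>U. openin T U \<Longrightarrow> U \<noteq> {} \<Longrightarrow> \<exists>V. openin T V \<and> V \<noteq> {} \<and> V \<subseteq> U \<and> V \<inter> S = {}"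
  shows "nowhere_densein T S"
  unfolding nowhere_densein_def
proof (intro conjI assms(1))
  show "T interior_of (T closure_of S) = {}"
  proof (rule ccontr)
    assume "T interior_of (T closure_of S) \<noteq> {}"
    then obtain x U where U: "openin T U" "x \<in> U" "U \<subseteq> T closure_of S"
      unfolding interior_of_def by blast
    then obtain V where V: "openin T V" "V \<noteq> {}" "V \<subseteq> U" "V \<inter> S = {}" using assms(2) by blast
    then obtain y where "y \<in> V" by blast
    then have "y \<in> T closure_of S" using U V by blast
    then show False using V \<open>y \<in> V\<close> unfolding in_closure_of by blast
  qed
qed

lemma ND_elim:
  assumes "nowhere_densein T S" "openin T U" "U \<noteq> {}"
  shows "\<exists>V. openin T V \<and> V \<noteq> {} \<and> V \<subseteq> U \<and> V \<inter> S = {}"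
proof -
  have S: "S \<subseteq> topspace T" "T interior_of (T closure_of S) = {}" using assms(1) unfolding nowhere_densein_def by auto
  have "\<not> U \<subseteq> T closure_of S"
    using interior_of_maximal[of U "T closure_of S" T] assms(2,3) S(2) by blast
  moreover have "openin T (U - T closure_of S)" using openin_diff[OF assms(2) closedin_closure_of] .
  moreover have "S \<subseteq> T closure_of S" using closure_of_subset[OF S(1)] .
  ultimately show ?thesis by (intro exI[of _ "U - T closure_of S"]) blast
qed

lemma ND_intro_cyl:
  assumes g: "goodfam D AA" and S: "S \<subseteq> Func D R"
    and H: "\<And>f A. f \<in> Func D R \<Longrightarrow> A \<in> AA \<Longrightarrow>
              \<exists>f'\<in>cyl D R A f. \<exists>A'\<in>AA. A \<subseteq> A' \<and> cyl D R A' f' \<inter> S = {}"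
  shows "nowhere_densein (cyltop D R AA) S"
proof (rule ND_intro)
  show "S \<subseteq> topspace (cyltop D R AA)" by (subst topspace_cyltop[OF g]) (rule S)
next
  fix U assume U: "openin (cyltop D R AA) U" "U \<noteq> {}"
  then obtain f where f: "f \<in> U" by blast
  have "f \<in> Func D R" using f openin_subset[OF U(1)] topspace_cyltop[OF g] by blast
  moreover obtain A where A: "A \<in> AA" "cyl D R A f \<subseteq> U" using nbhd_cyl[OF g U(1) f] by blast
  ultimately obtain f' A' where f': "f' \<in> cyl D R A f" "A' \<in> AA" "A \<subseteq> A'" "cyl D R A' f' \<inter> S = {}"
    using H by blast
  have "f' \<in> Func D R" using f' cyl_sub_Func by blast
  have V: "openin (cyltop D R AA) (cyl D R A' f')" using open_cyl[OF g f'(2) \<open>f' \<in> Func D R\<close>] .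
  have "f' \<in> cyl D R A' f'" using self_in_cyl[OF \<open>f' \<in> Func D R\<close>] .
  moreover have "cyl D R A' f' \<subseteq> U" using cyl_mono[OF f'(3) f'(1)] A(2) by (rule subset_trans)
  ultimately show "\<exists>V. openin (cyltop D R AA) V \<and> V \<noteq> {} \<and> V \<subseteq> U \<and> V \<inter> S = {}"
    using V f'(4) by blast
qed

lemma non_le_non_map:
  assumes "\<phi> ` topspace Ts \<subseteq> topspace Tt"
    and "\<And>S. nowhere_densein Tt S \<Longrightarrow> nowhere_densein Ts {x\<in>topspace Ts. \<phi> x \<in> S}"
  shows "non_le_non kappa Tt Ts"
  unfolding non_le_non_def
proof (intro allI impI)
  fix Y' assume Y': "Y' \<subseteq> topspace Ts \<and> \<not> kmeagre kappa Ts Y'"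
  show "\<exists>Y. Y \<subseteq> topspace Tt \<and> \<not> kmeagre kappa Tt Y \<and> |Y| \<le>o |Y'|"
  proof (intro exI conjI)
    show "\<phi> ` Y' \<subseteq> topspace Tt" using Y' assms(1) by blast
    show "|\<phi> ` Y'| \<le>o |Y'|" by (rule card_of_image)
    show "\<not> kmeagre kappa Tt (\<phi> ` Y')"
    proof
      assume "kmeagre kappa Tt (\<phi> ` Y')"
      then obtain N where N: "|N| \<le>o kappa" "\<forall>S\<in>N. nowhere_densein Tt S" "\<phi> ` Y' \<subseteq> \<Union>N"
        unfolding kmeagre_def by blast
      let ?N' = "(\<lambda>S. {x\<in>topspace Ts. \<phi> x \<in> S}) ` N"
      have "|?N'| \<le>o kappa" using card_of_image N(1) ordLeq_transitive by blast
      moreover have "\<forall>S\<in>?N'. nowhere_densein Ts S" using N(2) assms(2) by blast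
      moreover have "Y' \<subseteq> \<Union>?N'" using N(3) Y' by blast
      ultimately have "kmeagre kappa Ts Y'" unfolding kmeagre_def using Y' by blast
      then show False using Y' by blast
    qed
  qed
qed

lemma nd_preimage_cyl:
  assumes gs: "goodfam Ds AAs" and gt: "goodfam Dt AAt"
    and H: "\<And>f A. f \<in> Func Ds Rs \<Longrightarrow> A \<in> AAs \<Longrightarrow> \<exists>A0\<in>AAt. \<exists>g\<in>Func Dt Rt.
       \<forall>g0\<in>cyl Dt Rt A0 g. \<forall>A'\<in>AAt. \<exists>A''\<in>AAs. \<exists>f''\<in>cyl Ds Rs A f. A \<subseteq> A'' \<and> \<phi> ` cyl Ds Rs A'' f'' \<subseteq> cyl Dt Rt A' g0"
    and S: "nowhere_densein (cyltop Dt Rt AAt) S"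
  shows "nowhere_densein (cyltop Ds Rs AAs) {x\<in>topspace (cyltop Ds Rs AAs). \<phi> x \<in> S}"
proof -
  have ts: "topspace (cyltop Ds Rs AAs) = Func Ds Rs" by (rule topspace_cyltop[OF gs])
  show ?thesis unfolding ts
  proof (rule ND_intro_cyl[OF gs])
    show "{x \<in> Func Ds Rs. \<phi> x \<in> S} \<subseteq> Func Ds Rs" by blast
  next
    fix f A assume f: "f \<in> Func Ds Rs" and A: "A \<in> AAs"
    obtain A0 g where A0: "A0 \<in> AAt" "g \<in> Func Dt Rt" and HH: "\<forall>g0\<in>cyl Dt Rt A0 g. \<forall>A'\<in>AAt. \<exists>A''\<in>AAs. \<exists>f''\<in>cyl Ds Rs A f. A \<subseteq> A'' \<and> \<phi> ` cyl Ds Rs A'' f'' \<subseteq> cyl Dt Rt A' g0"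
      using H[OF f A] by blast
    have W: "openin (cyltop Dt Rt AAt) (cyl Dt Rt A0 g)" "cyl Dt Rt A0 g \<noteq> {}"
      using open_cyl[OF gt A0(1,2)] self_in_cyl[OF A0(2)] by auto
    obtain V where V: "openin (cyltop Dt Rt AAt) V" "V \<noteq> {}" "V \<subseteq> cyl Dt Rt A0 g" "V \<inter> S = {}"
      using ND_elim[OF S W] by blast
    obtain g0 where g0: "g0 \<in> V" using V(2) by blast
    obtain A' where A': "A' \<in> AAt" "cyl Dt Rt A' g0 \<subseteq> V" using nbhd_cyl[OF gt V(1) g0] by blast
    have "g0 \<in> cyl Dt Rt A0 g" using g0 V(3) by blast
    then obtain A'' f'' where F: "A'' \<in> AAs" "f'' \<in> cyl Ds Rs A f" "A \<subseteq> A''" "\<phi> ` cyl Ds Rs A'' f'' \<subseteq> cyl Dt Rt A' g0"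
      using HH A'(1) by blast
    have "cyl Ds Rs A'' f'' \<inter> {x \<in> Func Ds Rs. \<phi> x \<in> S} = {}" using F(4) A'(2) V(4) by blast
    then show "\<exists>f'\<in>cyl Ds Rs A f. \<exists>A'\<in>AAs. A \<subseteq> A' \<and> cyl Ds Rs A' f' \<inter> {x \<in> Func Ds Rs. \<phi> x \<in> S} = {}"
      using F by blast
  qed
qed

lemma non_le_non_cyl:
  assumes gs: "goodfam Ds AAs" and gt: "goodfam Dt AAt"
    and phi: "\<And>f. f \<in> Func Ds Rs \<Longrightarrow> \<phi> f \<in> Func Dt Rt"
    and H: "\<And>f A. f \<in> Func Ds Rs \<Longrightarrow> A \<in> AAs \<Longrightarrow> \<exists>A0\<in>AAt. \<exists>g\<in>Func Dt Rt.
       \<forall>g0\<in>cyl Dt Rt A0 g. \<forall>A'\<in>AAt. \<exists>A''\<in>AAs. \<exists>f''\<in>cyl Ds Rs A f. A \<subseteq> A'' \<and> \<phi> ` cyl Ds Rs A'' f'' \<subseteq> cyl Dt Rt A' g0"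
  shows "non_le_non kappa (cyltop Dt Rt AAt) (cyltop Ds Rs AAs)"
proof (rule non_le_non_map[where \<phi>=\<phi>])
  show "\<phi> ` topspace (cyltop Ds Rs AAs) \<subseteq> topspace (cyltop Dt Rt AAt)"
    unfolding topspace_cyltop[OF gs] topspace_cyltop[OF gt] using phi by blast
  show "\<And>S. nowhere_densein (cyltop Dt Rt AAt) S \<Longrightarrow>
         nowhere_densein (cyltop Ds Rs AAs) {x \<in> topspace (cyltop Ds Rs AAs). \<phi> x \<in> S}"
    by (rule nd_preimage_cyl[OF gs gt H])
qed

lemma coord_map:
  assumes g: "goodfam D AA" and pr: "pr ` R \<subseteq> R'" "R' \<subseteq> pr ` R"
  shows "non_le_non kappa (cyltop D R' AA) (cyltop D R AA)"
proof -
  define \<phi> where "\<phi> = (\<lambda>f x. if x \<in> D then pr (f x) else undefined)"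
  have phi: "\<phi> f \<in> Func D R'" if "f \<in> Func D R" for f
    using that pr(1) unfolding \<phi>_def Func_def by auto
  show ?thesis
  proof (rule non_le_non_cyl[OF g g, where \<phi>=\<phi>])
    show "\<And>f. f \<in> Func D R \<Longrightarrow> \<phi> f \<in> Func D R'" by (rule phi)
  next
    fix f A assume f: "f \<in> Func D R" and A: "A \<in> AA"
    show "\<exists>A0\<in>AA. \<exists>g\<in>Func D R'. \<forall>g0\<in>cyl D R' A0 g. \<forall>A'\<in>AA. \<exists>A''\<in>AA. \<exists>f''\<in>cyl D R A f.
            A \<subseteq> A'' \<and> \<phi> ` cyl D R A'' f'' \<subseteq> cyl D R' A' g0"
    proof (rule bexI[of _ A], rule bexI[of _ "\<phi> f"], intro ballI)
      fix g0 A' assume g0: "g0 \<in> cyl D R' A (\<phi> f)" and A': "A' \<in> AA"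
      obtain A3 where A3: "A3 \<in> AA" "A \<subseteq> A3" "A' \<subseteq> A3" using goodfam_dir[OF g A A'] by blast
      have A'D: "A' \<subseteq> D" using goodfam_sub[OF g A'] .
      define f'' where "f'' = (\<lambda>x. if x \<in> A' - A then inv_into R pr (g0 x) else f x)"
      have g0F: "g0 \<in> Func D R'" using g0 cyl_sub_Func by blast
      have f''F: "f'' \<in> Func D R"
        unfolding Func_def
      proof (intro CollectI conjI allI ballI impI)
        fix x assume x: "x \<in> D"
        show "f'' x \<in> R"
        proof (cases "x \<in> A' - A")
          case True
          then have "g0 x \<in> pr ` R" using g0F x pr(2) unfolding Func_def by blast
          then show ?thesis using True unfolding f''_def by (simp add: inv_into_into)
        next
          case False then show ?thesis using f x unfolding f''_def Func_def by auto
        qed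
      next
        fix x assume x: "x \<notin> D"
        then show "f'' x = undefined" using A'D f unfolding f''_def Func_def by auto
      qed
      have f''c: "f'' \<in> cyl D R A f" using f''F unfolding cyl_def f''_def by auto
      have "\<phi> ` cyl D R A3 f'' \<subseteq> cyl D R' A' g0"
      proof
        fix y assume "y \<in> \<phi> ` cyl D R A3 f''"
        then obtain h where h: "h \<in> cyl D R A3 f''" "y = \<phi> h" by blast
        have hF: "h \<in> Func D R" using h(1) cyl_sub_Func by blast
        have "y x = g0 x" if x: "x \<in> A'" for x
        proof -
          have xD: "x \<in> D" using x A'D by blast
          have hx: "h x = f'' x" using h(1) x A3(3) unfolding cyl_def by blast
          show ?thesis
          proof (cases "x \<in> A")
            case True
            then have "g0 x = \<phi> f x" using g0 unfolding cyl_def by blast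
            then show ?thesis using True hx xD h(2) unfolding f''_def \<phi>_def by simp
          next
            case False
            have "g0 x \<in> pr ` R" using g0F xD pr(2) unfolding Func_def by blast
            then have "pr (inv_into R pr (g0 x)) = g0 x" by (rule f_inv_into_f)
            then show ?thesis using False x hx xD h(2) unfolding f''_def \<phi>_def by simp
          qed
        qed
        then show "y \<in> cyl D R' A' g0" using phi[OF hF] h(2) unfolding cyl_def by blast
      qed
      then show "\<exists>A''\<in>AA. \<exists>f''\<in>cyl D R A f. A \<subseteq> A'' \<and> \<phi> ` cyl D R A'' f'' \<subseteq> cyl D R' A' g0"
        using A3 f''c by blast
    qed (use A phi[OF f] in auto)
  qed
qed

lemma restr_map:
  fixes D :: "'d set" and D' :: "'i set" and R :: "'r set"
  assumes gs: "goodfam D AA" and gt: "goodfam D' AA'"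
    and e: "inj_on e D'" "e ` D' \<subseteq> D"
    and a: "\<And>A. A \<in> AA \<Longrightarrow> {i\<in>D'. e i \<in> A} \<in> AA'"
    and b: "\<And>A A'. A \<in> AA \<Longrightarrow> A' \<in> AA' \<Longrightarrow> \<exists>A''\<in>AA. A \<union> e ` A' \<subseteq> A''"
  shows "non_le_non kappa (cyltop D' R AA') (cyltop D R AA)"
proof -
  define \<phi> :: "('d \<Rightarrow> 'r) \<Rightarrow> 'i \<Rightarrow> 'r" where "\<phi> = (\<lambda>f i. if i \<in> D' then f (e i) else undefined)"
  have phi: "\<phi> f \<in> Func D' R" if "f \<in> Func D R" for f
    using that e(2) unfolding \<phi>_def Func_def by auto
  show ?thesis
  proof (rule non_le_non_cyl[OF gs gt, where \<phi>=\<phi>])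
    show "\<And>f. f \<in> Func D R \<Longrightarrow> \<phi> f \<in> Func D' R" by (rule phi)
  next
    fix f A assume f: "f \<in> Func D R" and A: "A \<in> AA"
    show "\<exists>A0\<in>AA'. \<exists>g\<in>Func D' R. \<forall>g0\<in>cyl D' R A0 g. \<forall>A'\<in>AA'. \<exists>A''\<in>AA. \<exists>f''\<in>cyl D R A f.
            A \<subseteq> A'' \<and> \<phi> ` cyl D R A'' f'' \<subseteq> cyl D' R A' g0"
    proof (rule bexI[of _ "{i\<in>D'. e i \<in> A}"], rule bexI[of _ "\<phi> f"], intro ballI)
      fix g0 A' assume g0: "g0 \<in> cyl D' R {i\<in>D'. e i \<in> A} (\<phi> f)" and A': "A' \<in> AA'"
      obtain A3 where A3: "A3 \<in> AA" "A \<union> e ` A' \<subseteq> A3" using b[OF A A'] by blast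
      have A'D: "A' \<subseteq> D'" using goodfam_sub[OF gt A'] .
      define f'' where "f'' = (\<lambda>x. if x \<in> e ` A' - A then g0 (inv_into D' e x) else f x)"
      have g0F: "g0 \<in> Func D' R" using g0 cyl_sub_Func by blast
      have f''F: "f'' \<in> Func D R"
        unfolding Func_def
      proof (intro CollectI conjI allI ballI impI)
        fix x assume x: "x \<in> D"
        show "f'' x \<in> R"
        proof (cases "x \<in> e ` A' - A")
          case True
          then have "inv_into D' e x \<in> D'" using A'D by (meson DiffD1 image_mono inv_into_into subsetD)
          then show ?thesis using True g0F unfolding f''_def Func_def by auto
        next
          case False then show ?thesis using f x unfolding f''_def Func_def by auto
        qed
      next
        fix x assume x: "x \<notin> D"
        then have "x \<notin> e ` A'" using A'D e(2) by blast
        then show "f'' x = undefined" using x f unfolding f''_def Func_def by auto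
      qed
      have f''c: "f'' \<in> cyl D R A f" using f''F unfolding cyl_def f''_def by auto
      have "\<phi> ` cyl D R A3 f'' \<subseteq> cyl D' R A' g0"
      proof
        fix y assume "y \<in> \<phi> ` cyl D R A3 f''"
        then obtain h where h: "h \<in> cyl D R A3 f''" "y = \<phi> h" by blast
        have hF: "h \<in> Func D R" using h(1) cyl_sub_Func by blast
        have "y i = g0 i" if i: "i \<in> A'" for i
        proof -
          have iD: "i \<in> D'" using i A'D by blast
          have hx: "h (e i) = f'' (e i)" using h(1) i A3(2) unfolding cyl_def by blast
          show ?thesis
          proof (cases "e i \<in> A")
            case True
            then have "g0 i = \<phi> f i" using g0 iD unfolding cyl_def by blast
            then show ?thesis using True hx iD h(2) unfolding f''_def \<phi>_def by simp
          next
            case False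
            have "inv_into D' e (e i) = i" using e(1) iD by (rule inv_into_f_f)
            then show ?thesis using False i hx iD h(2) unfolding f''_def \<phi>_def by simp
          qed
        qed
        then show "y \<in> cyl D' R A' g0" using phi[OF hF] h(2) unfolding cyl_def by blast
      qed
      then show "\<exists>A''\<in>AA. \<exists>f''\<in>cyl D R A f. A \<subseteq> A'' \<and> \<phi> ` cyl D R A'' f'' \<subseteq> cyl D' R A' g0"
        using A3 f''c by blast
    qed (use A a phi[OF f] in auto)
  qed
qed

lemma fin_less_inf: "finite A \<Longrightarrow> infinite (Field r) \<Longrightarrow> Well_order r \<Longrightarrow> |A| <o r"
  by (metis Field_card_of card_of_Well_order finite_ordLess_infinite)

lemma times_less:
  assumes r: "Card_order r" "infinite (Field r)" and A: "|A| <o r" and B: "|B| <o r"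
  shows "|A \<times> B| <o r"
proof (cases "finite (A \<times> B)")
  case True then show ?thesis using fin_less_inf r by (blast intro: card_order_on_well_order_on)
next
  case False
  then have ne: "A \<noteq> {}" "B \<noteq> {}" by auto
  from ordLess_or_ordLeq[OF card_of_Well_order card_of_Well_order, of A B]
  show ?thesis
  proof
    assume AB: "|A| <o |B|"
    then have "|A| \<le>o |B|" by (rule ordLess_imp_ordLeq)
    moreover have "infinite B" using False AB
      by (metis card_of_ordLeq_finite finite_cartesian_product ordLess_imp_ordLeq)
    ultimately have "|A \<times> B| \<le>o |B|"
      using card_of_Times_ordLeq_infinite_Field[of "|B|" A B, unfolded Field_card_of] ordLeq_reflexive[OF card_of_Well_order, of B] card_of_card_order_on[of B] by blast
    then show ?thesis using B ordLeq_ordLess_trans by blast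
  next
    assume BA: "|B| \<le>o |A|"
    moreover have "infinite A" using False BA
      by (metis card_of_ordLeq_finite finite_cartesian_product)
    ultimately have "|A \<times> B| \<le>o |A|"
      using card_of_Times_ordLeq_infinite_Field[of "|A|" A B, unfolded Field_card_of] ordLeq_reflexive[OF card_of_Well_order, of A] card_of_card_order_on[of A] by blast
    then show ?thesis using A ordLeq_ordLess_trans by blast
  qed
qed

lemma un_less:
  assumes r: "Card_order r" "infinite (Field r)" and A: "|A| <o r" and B: "|B| <o r"
  shows "|A \<union> B| <o r"
  using card_of_Un_ordLess_infinite_Field[OF r(2) r(1) A B] .

lemma sing_less:
  assumes r: "Card_order r" "infinite (Field r)"
  shows "|{x}| <o r"
  using fin_less_inf r by (blast intro: card_order_on_well_order_on)

lemma diff_large: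
  assumes "infinite A" "|B| <o |A|"
  shows "|A| \<le>o |A - B|"
proof -
  have "\<not> |A - B| <o |A|"
  proof
    assume "|A - B| <o |A|"
    then have "|(A - B) \<union> B| <o |A|" using card_of_Un_ordLess_infinite assms by blast
    moreover have "|A| \<le>o |(A - B) \<union> B|" by (rule card_of_mono1) blast
    ultimately show False using not_ordLess_ordLeq by blast
  qed
  then show ?thesis using ordLess_or_ordLeq[OF card_of_Well_order card_of_Well_order] by blast
qed

locale setting =
  fixes kappa :: "'k rel" and mu :: "'m rel"
  assumes ck: "Card_order kappa" and ik: "infinite (Field kappa)"
    and cm: "Card_order mu" and nreg: "\<not> regularCard mu" and cof: "cofinality_is mu kappa"
begin

abbreviation "K \<equiv> Field kappa"
abbreviation "M \<equiv> Field mu"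

lemma wom: "wo_rel mu" using cm by (rule Card_order_wo_rel)
lemma wok: "wo_rel kappa" using ck by (rule Card_order_wo_rel)

lemma transm: "(a,b) \<in> mu \<Longrightarrow> (b,c) \<in> mu \<Longrightarrow> (a,c) \<in> mu"
  using wo_rel.TRANS[OF wom] unfolding trans_def by blast
lemma antim: "(a,b) \<in> mu \<Longrightarrow> (b,a) \<in> mu \<Longrightarrow> a = b"
  using wo_rel.ANTISYM[OF wom] unfolding antisym_def by blast
lemma totm: "a \<in> M \<Longrightarrow> b \<in> M \<Longrightarrow> (a,b) \<in> mu \<or> (b,a) \<in> mu"
  using wo_rel.TOTALS[OF wom] by blast
lemma reflm: "a \<in> M \<Longrightarrow> (a,a) \<in> mu"
  using wo_rel.REFL[OF wom] unfolding refl_on_def by blast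
lemma transk: "(a,b) \<in> kappa \<Longrightarrow> (b,c) \<in> kappa \<Longrightarrow> (a,c) \<in> kappa"
  using wo_rel.TRANS[OF wok] unfolding trans_def by blast
lemma totk: "a \<in> K \<Longrightarrow> b \<in> K \<Longrightarrow> (a,b) \<in> kappa \<or> (b,a) \<in> kappa"
  using wo_rel.TOTALS[OF wok] by blast

lemma K0_ex: "\<exists>K0. K0 \<subseteq> M \<and> cofinal K0 mu \<and> |K0| =o kappa"
  using cof unfolding cofinality_is_def by blast

lemma cof_le: "B \<subseteq> M \<Longrightarrow> cofinal B mu \<Longrightarrow> kappa \<le>o |B|"
  using cof unfolding cofinality_is_def by blast

lemma Kcard: "|K| =o kappa" using ck by (rule card_of_Field_ordIso)
lemma Mcard: "|M| =o mu" using cm by (rule card_of_Field_ordIso)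

lemma im: "infinite M"
proof -
  obtain K0 where K0: "K0 \<subseteq> M" "|K0| =o kappa" using K0_ex by blast
  have "|K| =o |K0|" using ordIso_transitive[OF Kcard ordIso_symmetric[OF K0(2)]] .
  then have "|K| \<le>o |K0|" by (rule ordIso_imp_ordLeq)
  then have "infinite K0" using ik card_of_ordLeq_finite by blast
  then show ?thesis using K0(1) finite_subset by blast
qed

lemma KleM: "|K| \<le>o |M|"
proof -
  obtain K0 where K0: "K0 \<subseteq> M" "|K0| =o kappa" using K0_ex by blast
  have "|K| =o |K0|" using ordIso_transitive[OF Kcard ordIso_symmetric[OF K0(2)]] .
  then show ?thesis using ordLeq_transitive[OF ordIso_imp_ordLeq card_of_mono1[OF K0(1)]] by blast
qed

lemma nomax:
  assumes "a \<in> M" shows "\<exists>b\<in>M. a \<noteq> b \<and> (a,b) \<in> mu"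
proof -
  obtain K0 where K0: "K0 \<subseteq> M" "cofinal K0 mu" using K0_ex by blast
  then obtain b where "b \<in> K0" "a \<noteq> b" "(a,b) \<in> mu" using assms unfolding cofinal_def by blast
  then show ?thesis using K0(1) by blast
qed

lemma bounded:
  assumes B: "B \<subseteq> M" "|B| <o kappa"
  shows "\<exists>b\<in>M. B \<subseteq> underS mu b"
proof -
  have "\<not> cofinal B mu"
  proof
    assume "cofinal B mu"
    then have "kappa \<le>o |B|" using cof_le[OF B(1)] by blast
    then show False using B(2) not_ordLess_ordLeq by blast
  qed
  then obtain a where a: "a \<in> M" "\<forall>b\<in>B. \<not> (a \<noteq> b \<and> (a,b) \<in> mu)" unfolding cofinal_def by blast
  obtain a' where a': "a' \<in> M" "a \<noteq> a'" "(a,a') \<in> mu" using nomax[OF a(1)] by blast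
  have "x \<in> underS mu a'" if x: "x \<in> B" for x
  proof -
    have xM: "x \<in> M" using x B(1) by blast
    have "(x,a) \<in> mu"
    proof (cases "x = a")
      case True then show ?thesis using reflm a(1) by simp
    next
      case False then have "(a,x) \<notin> mu" using a(2) x by auto
      then show ?thesis using totm[OF xM a(1)] by blast
    qed
    then have xa': "(x,a') \<in> mu" using transm a'(3) by blast
    have "x \<noteq> a'"
    proof
      assume "x = a'"
      then have "(a',a) \<in> mu" using \<open>(x,a) \<in> mu\<close> by simp
      then show False using antim a'(2,3) by blast
    qed
    then show ?thesis using xa' unfolding underS_def by blast
  qed
  then show ?thesis using a'(1) by blast
qed

lemma underS_less: "a \<in> M \<Longrightarrow> |underS mu a| <o mu"
  using card_of_underS[OF cm] by blast

lemma regular_if: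
  assumes "\<And>L. L \<subseteq> M \<Longrightarrow> cofinal L mu \<Longrightarrow> \<not> |L| <o mu"
  shows False
proof -
  have "regularCard mu" unfolding regularCard_def
  proof (intro allI impI)
    fix L assume L: "L \<subseteq> M \<and> cofinal L mu"
    have "|L| \<le>o mu" using ordLeq_ordIso_trans[OF card_of_mono1 Mcard] L by blast
    moreover have "\<not> |L| <o mu" using assms L by blast
    ultimately show "|L| =o mu" using ordLeq_iff_ordLess_or_ordIso by blast
  qed
  then show False using nreg by blast
qed

lemma cof_cover: "L \<subseteq> M \<Longrightarrow> cofinal L mu \<Longrightarrow> M \<subseteq> (\<Union>k\<in>L. underS mu k)"
  unfolding cofinal_def underS_def by blast

lemma lim:
  assumes X: "|X| <o mu"
  shows "\<exists>a\<in>M. |X| <o |underS mu a|"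
proof (rule ccontr)
  assume "\<not> ?thesis"
  then have le: "\<forall>a\<in>M. |underS mu a| \<le>o |X|"
    using ordLess_or_ordLeq[OF card_of_Well_order card_of_Well_order] by blast
  show False
  proof (rule regular_if)
    fix L assume L: "L \<subseteq> M" "cofinal L mu"
    show "\<not> |L| <o mu"
    proof
      assume Kl: "|L| <o mu"
      have 1: "|M| \<le>o |\<Union>k\<in>L. underS mu k|" using card_of_mono1[OF cof_cover[OF L]] .
      have 2: "|\<Union>k\<in>L. underS mu k| \<le>o |SIGMA k:L. underS mu k|" by (rule card_of_UNION_Sigma)
      have "\<forall>k\<in>L. |underS mu k| \<le>o |X|" using le L(1) by blast
      then have 3: "|SIGMA k:L. underS mu k| \<le>o |L \<times> X|"
        using card_of_Sigma_mono1[of L "\<lambda>k. underS mu k" "\<lambda>_. X"] by simp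
      have 4: "|L \<times> X| <o mu" using times_less[OF cm im Kl X] .
      have "|M| <o mu" using ordLeq_ordLess_trans[OF ordLeq_transitive[OF ordLeq_transitive[OF 1 2] 3] 4] .
      then show False using Mcard not_ordLess_ordIso by blast
    qed
  qed
qed

lemma inf_underS: "\<exists>a\<in>M. infinite (underS mu a)"
proof (rule ccontr)
  assume "\<not> ?thesis"
  then have fin: "\<forall>a\<in>M. finite (underS mu a)" by blast
  show False
  proof (rule regular_if)
    fix L assume L: "L \<subseteq> M" "cofinal L mu"
    have "infinite L"
    proof
      assume "finite L"
      then have "finite (\<Union>k\<in>L. underS mu k)" using fin L(1) by blast
      then show False using cof_cover[OF L] im finite_subset by blast
    qed
    have "\<forall>k\<in>L. |underS mu k| \<le>o |L|"
    proof
      fix k assume "k \<in> L"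
      then have fk: "finite (underS mu k)" using fin L(1) by blast
      from ordLess_or_ordLeq[OF card_of_Well_order card_of_Well_order, of "underS mu k" L]
      show "|underS mu k| \<le>o |L|"
      proof
        assume "|underS mu k| <o |L|" then show ?thesis by (rule ordLess_imp_ordLeq)
      next
        assume "|L| \<le>o |underS mu k|"
        then have "finite L" using fk card_of_ordLeq_finite by blast
        then show ?thesis using \<open>infinite L\<close> by blast
      qed
    qed
    then have "|\<Union>k\<in>L. underS mu k| \<le>o |L|"
      using card_of_UNION_ordLeq_infinite[OF \<open>infinite L\<close> ordLeq_reflexive[OF card_of_Well_order]] by blast
    then have "|M| \<le>o |L|" using ordLeq_transitive[OF card_of_mono1[OF cof_cover[OF L]]] by blast
    then have "mu \<le>o |L|" using ordIso_ordLeq_trans[OF ordIso_symmetric[OF Mcard]] by blast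
    then show "\<not> |L| <o mu" using not_ordLess_ordLeq by blast
  qed
qed

lemma underS_mono_card:
  assumes "a \<in> M" "a' \<in> M" "|underS mu a| <o |underS mu a'|"
  shows "underS mu a \<subseteq> underS mu a'"
proof -
  have "(a,a') \<in> mu"
  proof (rule ccontr)
    assume "(a,a') \<notin> mu"
    then have "(a',a) \<in> mu" using totm assms(1,2) by blast
    then have "underS mu a' \<subseteq> underS mu a" using underS_incl_iff[OF wo_rel.LIN[OF wom] assms(2,1)] by blast
    then have "|underS mu a'| \<le>o |underS mu a|" by (rule card_of_mono1)
    then show False using assms(3) not_ordLess_ordLeq by blast
  qed
  then show ?thesis using underS_incl_iff[OF wo_rel.LIN[OF wom] assms(1,2)] by blast
qed

lemma lim2:
  fixes X :: "'m set"
  assumes X: "|X| <o mu"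
  shows "\<exists>a\<in>M. |X| <o |underS mu a| \<and> infinite (underS mu a)"
proof -
  obtain a1 where a1: "a1 \<in> M" "infinite (underS mu a1)" using inf_underS by blast
  have "|X \<union> underS mu a1| <o mu" using un_less[OF cm im X underS_less[OF a1(1)]] .
  then obtain a where a: "a \<in> M" "|X \<union> underS mu a1| <o |underS mu a|" using lim by blast
  have "|X| <o |underS mu a|" using ordLeq_ordLess_trans[OF card_of_mono1 a(2)] by blast
  moreover have "|underS mu a1| <o |underS mu a|"
    using ordLeq_ordLess_trans[OF card_of_mono1 a(2)] by blast
  then have "infinite (underS mu a)" using a1(2) card_of_ordLeq_finite ordLess_imp_ordLeq by blast
  ultimately show ?thesis using a(1) by blast
qed

end

lemma goodfam_small:
  assumes "Card_order lam" "infinite (Field lam)"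
  shows "goodfam D {A. A \<subseteq> D \<and> |A| <o lam}"
  unfolding goodfam_def
proof (intro conjI ballI)
  have "Well_order lam" using assms(1) by (rule card_order_on_well_order_on)
  then have "|{}| <o lam" using fin_less_inf[OF finite.emptyI assms(2)] by blast
  then show "{A. A \<subseteq> D \<and> |A| <o lam} \<noteq> {}" by blast
next
  fix A assume "A \<in> {A. A \<subseteq> D \<and> |A| <o lam}" then show "A \<subseteq> D" by blast
next
  fix A1 A2 assume "A1 \<in> {A. A \<subseteq> D \<and> |A| <o lam}" "A2 \<in> {A. A \<subseteq> D \<and> |A| <o lam}"
  then have "A1 \<union> A2 \<in> {A. A \<subseteq> D \<and> |A| <o lam}" using un_less[OF assms] by blast
  then show "\<exists>A3\<in>{A. A \<subseteq> D \<and> |A| <o lam}. A1 \<union> A2 \<subseteq> A3" by blast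
qed

context setting
begin

lemma goodfam_bd: "goodfam M {underS mu a | a. a \<in> M}"
  unfolding goodfam_def
proof (intro conjI ballI)
  obtain m where "m \<in> M" using infinite_imp_nonempty[OF im] by blast
  then show "{underS mu a | a. a \<in> M} \<noteq> {}" by blast
next
  fix A assume "A \<in> {underS mu a | a. a \<in> M}" then show "A \<subseteq> M" using underS_Field[of _ mu] by blast
next
  fix A1 A2 assume A: "A1 \<in> {underS mu a | a. a \<in> M}" "A2 \<in> {underS mu a | a. a \<in> M}"
  then obtain a1 a2 where a: "a1 \<in> M" "a2 \<in> M" "A1 = underS mu a1" "A2 = underS mu a2" by blast
  show "\<exists>A3\<in>{underS mu a | a. a \<in> M}. A1 \<union> A2 \<subseteq> A3"
  proof (cases "(a1,a2) \<in> mu")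
    case True
    then have "underS mu a1 \<subseteq> underS mu a2" using underS_incl_iff[OF wo_rel.LIN[OF wom] a(1,2)] by simp
    then have "A1 \<union> A2 \<subseteq> A2" using a(3,4) by simp
    then show ?thesis using A(2) by (intro bexI[of _ A2])
  next
    case False
    then have "(a2,a1) \<in> mu" using totm a(1,2) by blast
    then have "underS mu a2 \<subseteq> underS mu a1" using underS_incl_iff[OF wo_rel.LIN[OF wom] a(2,1)] by simp
    then have "A1 \<union> A2 \<subseteq> A1" using a(3,4) by simp
    then show ?thesis using A(1) by (intro bexI[of _ A1])
  qed
qed

end

context setting
begin

lemma cseq: "\<exists>c. c ` K \<subseteq> M \<and> inj_on c K \<and> (\<forall>a\<in>M. |{i\<in>K. c i \<in> underS mu a}| <o kappa)"
proof -
  obtain K0 where K0: "K0 \<subseteq> M" "cofinal K0 mu" "|K0| =o kappa" using K0_ex by (elim exE conjE)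
  have "|K| =o |K0|" using ordIso_transitive[OF Kcard ordIso_symmetric[OF K0(3)]] .
  then have "\<exists>e. bij_betw e K K0" using card_of_ordIso[of K K0] by simp
  then obtain e where e: "bij_betw e K K0" by (elim exE)
  define P :: "('k \<Rightarrow> 'm) \<Rightarrow> 'k \<Rightarrow> 'm \<Rightarrow> bool" where "P = (\<lambda>g i x. x \<in> M \<and> e i \<in> underS mu x \<and> (\<forall>j\<in>underS kappa i. g j \<in> M \<longrightarrow> g j \<in> underS mu x))"
  define H :: "('k \<Rightarrow> 'm) \<Rightarrow> 'k \<Rightarrow> 'm" where "H = (\<lambda>g i. Eps (P g i))"
  have adm: "wo_rel.adm_wo kappa H"
    unfolding wo_rel.adm_wo_def[OF wok]
  proof (intro allI impI)
    fix f g :: "'k \<Rightarrow> 'm" and i assume fg: "\<forall>y\<in>underS kappa i. f y = g y"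
    have "P f i = P g i" unfolding P_def
    proof (intro ext)
      fix x show "(x \<in> M \<and> e i \<in> underS mu x \<and> (\<forall>j\<in>underS kappa i. f j \<in> M \<longrightarrow> f j \<in> underS mu x)) =
        (x \<in> M \<and> e i \<in> underS mu x \<and> (\<forall>j\<in>underS kappa i. g j \<in> M \<longrightarrow> g j \<in> underS mu x))"
        using fg by (metis (no_types, lifting))
    qed
    then show "H f i = H g i" unfolding H_def by simp
  qed
  define c where "c = wo_rel.worec kappa H"
  have fixp: "c = H c" unfolding c_def using wo_rel.worec_fixpoint[OF wok adm] .
  have spec: "P c i (c i)" if i: "i \<in> K" for i
  proof -
    let ?C = "{c j | j. j \<in> underS kappa i \<and> c j \<in> M}"
    have ei: "e i \<in> K0" using e i bij_betw_apply by fast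
    have B1: "?C \<union> {e i} \<subseteq> M" using K0(1) ei by blast
    have "?C \<subseteq> c ` underS kappa i" by blast
    then have "|?C| \<le>o |underS kappa i|" by (rule ordLeq_transitive[OF card_of_mono1 card_of_image])
    then have "|?C| <o kappa" by (rule ordLeq_ordLess_trans[OF _ card_of_underS[OF ck i]])
    then have "|?C \<union> {e i}| <o kappa" by (rule un_less[OF ck ik _ sing_less[OF ck ik]])
    then obtain b where b: "b \<in> M" "?C \<union> {e i} \<subseteq> underS mu b" using bounded[OF B1] by blast
    have "P c i b" unfolding P_def using b by blast
    then have "P c i (Eps (P c i))" by (rule someI)
    moreover have "c i = Eps (P c i)" using fun_cong[OF fixp, of i] unfolding H_def by simp
    ultimately show ?thesis by simp
  qed
  have cM: "c ` K \<subseteq> M" using spec unfolding P_def by blast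
  have lt: "c j \<in> underS mu (c i)" if "i \<in> K" "j \<in> underS kappa i" for i j
  proof -
    have "j \<in> K" using that(2) underS_Field by fast
    then have "c j \<in> M" using cM by blast
    then show ?thesis using spec[OF that(1)] that(2) unfolding P_def by blast
  qed
  have inj: "inj_on c K"
  proof (rule inj_onI)
    fix i j assume ij: "i \<in> K" "j \<in> K" "c i = c j"
    show "i = j"
    proof (rule ccontr)
      assume ne: "i \<noteq> j"
      from totk[OF ij(1,2)] show False
      proof
        assume "(i,j) \<in> kappa"
        then have "i \<in> underS kappa j" using ne unfolding underS_def by blast
        then have "c i \<in> underS mu (c j)" using lt ij(2) by blast
        then show False using ij(3) unfolding underS_def by auto
      next
        assume "(j,i) \<in> kappa"
        then have "j \<in> underS kappa i" using ne unfolding underS_def by blast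
        then have "c j \<in> underS mu (c i)" using lt ij(1) by blast
        then show False using ij(3) unfolding underS_def by auto
      qed
    qed
  qed
  have small: "|{i\<in>K. c i \<in> underS mu a}| <o kappa" if a: "a \<in> M" for a
  proof -
    obtain b0 where b0: "b0 \<in> K0" "a \<noteq> b0" "(a,b0) \<in> mu" using K0(2) a unfolding cofinal_def by blast
    obtain i0 where i0: "i0 \<in> K" "e i0 = b0" using e b0(1) unfolding bij_betw_def by blast
    have "{i\<in>K. c i \<in> underS mu a} \<subseteq> underS kappa i0"
    proof
      fix i assume i: "i \<in> {i\<in>K. c i \<in> underS mu a}"
      show "i \<in> underS kappa i0"
      proof (rule ccontr)
        assume ni: "i \<notin> underS kappa i0"
        have ciM: "c i \<in> M" using i cM by blast
        have 1: "(c i0, c i) \<in> mu"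
        proof (cases "i = i0")
          case True then show ?thesis using reflm ciM by simp
        next
          case False
          then have "(i,i0) \<notin> kappa" using ni unfolding underS_def by blast
          then have "(i0,i) \<in> kappa" using totk i0(1) i by blast
          then have "i0 \<in> underS kappa i" using False unfolding underS_def by blast
          then show ?thesis using lt i unfolding underS_def by blast
        qed
        have 2: "(b0, c i0) \<in> mu" using spec[OF i0(1)] i0(2) unfolding P_def underS_def by blast
        have 3: "(c i, a) \<in> mu" using i unfolding underS_def by blast
        have "(b0, a) \<in> mu" using transm[OF transm[OF 2 1] 3] .
        then show False using antim b0(2,3) by blast
      qed
    qed
    then have "|{i\<in>K. c i \<in> underS mu a}| \<le>o |underS kappa i0|" by (rule card_of_mono1)
    then show ?thesis by (rule ordLeq_ordLess_trans[OF _ card_of_underS[OF ck i0(1)]])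
  qed
  show ?thesis using cM inj small by blast
qed

end

lemma pow_nd:
  fixes A :: "'a set" and D :: "'d set" and R :: "'r set"
  assumes g: "goodfam D AA" and Y: "Y \<subseteq> Func D R" and Yl: "|Y| <o |Func A R|"
    and cp: "\<And>A0. A0 \<in> AA \<Longrightarrow> \<exists>A1\<in>AA. \<exists>e. A0 \<subseteq> A1 \<and> inj_on e A \<and> e ` A \<subseteq> A1 - A0"
  shows "nowhere_densein (cyltop D R AA) Y"
proof (rule ND_intro_cyl[OF g Y])
  fix f A0 assume f: "f \<in> Func D R" and A0: "A0 \<in> AA"
  obtain A1 e where A1: "A1 \<in> AA" "A0 \<subseteq> A1" "inj_on e A" "e ` A \<subseteq> A1 - A0" using cp[OF A0] by blast
  have A1D: "A1 \<subseteq> D" using goodfam_sub[OF g A1(1)] .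
  define r :: "('d \<Rightarrow> 'r) \<Rightarrow> 'a \<Rightarrow> 'r" where "r = (\<lambda>g a. if a \<in> A then g (e a) else undefined)"
  have "|r ` Y| <o |Func A R|" using ordLeq_ordLess_trans[OF card_of_image Yl] .
  then have "\<not> Func A R \<subseteq> r ` Y"
  proof (intro notI)
    assume "|r ` Y| <o |Func A R|" "Func A R \<subseteq> r ` Y"
    then show False using card_of_mono1[of "Func A R" "r ` Y"] not_ordLess_ordLeq by blast
  qed
  then obtain h where h: "h \<in> Func A R" "h \<notin> r ` Y" by blast
  define f' where "f' = (\<lambda>x. if x \<in> e ` A then h (inv_into A e x) else f x)"
  have f'F: "f' \<in> Func D R" unfolding Func_def
  proof (intro CollectI conjI allI ballI impI)
    fix x assume x: "x \<in> D"
    show "f' x \<in> R"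
    proof (cases "x \<in> e ` A")
      case True then have "inv_into A e x \<in> A" by (rule inv_into_into)
      then show ?thesis using True h(1) unfolding f'_def Func_def by auto
    next
      case False then show ?thesis using f x unfolding f'_def Func_def by auto
    qed
  next
    fix x assume x: "x \<notin> D"
    then have "x \<notin> e ` A" using A1(4) A1D by blast
    then show "f' x = undefined" using x f unfolding f'_def Func_def by auto
  qed
  have f'c: "f' \<in> cyl D R A0 f" using f'F A1(4) unfolding cyl_def f'_def by auto
  have "cyl D R A1 f' \<inter> Y = {}"
  proof (rule ccontr)
    assume "cyl D R A1 f' \<inter> Y \<noteq> {}"
    then obtain g where g: "g \<in> cyl D R A1 f'" "g \<in> Y" by blast
    have "r g = h"
    proof
      fix a show "r g a = h a"
      proof (cases "a \<in> A")
        case True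
        then have "e a \<in> A1" using A1(4) by blast
        then have "g (e a) = f' (e a)" using g(1) unfolding cyl_def by blast
        also have "\<dots> = h a" unfolding f'_def using True inv_into_f_f[OF A1(3) True] by simp
        finally show ?thesis unfolding r_def using True by simp
      next
        case False then show ?thesis using h(1) unfolding r_def Func_def by simp
      qed
    qed
    then show False using h(2) g(2) by blast
  qed
  then show "\<exists>f'\<in>cyl D R A0 f. \<exists>A'\<in>AA. A0 \<subseteq> A' \<and> cyl D R A' f' \<inter> Y = {}" using f'c A1(1,2) by blast
qed

lemma pow_le_non_gen:
  assumes g: "goodfam D AA" and ck: "Card_order kappa" "Field kappa \<noteq> {}"
    and cp: "\<And>A A0. A \<subseteq> Field lam \<Longrightarrow> |A| <o lam \<Longrightarrow> A0 \<in> AA \<Longrightarrow> \<exists>A1\<in>AA. \<exists>e. A0 \<subseteq> A1 \<and> inj_on e A \<and> e ` A \<subseteq> A1 - A0"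
  shows "pow_less_le_non R lam kappa (cyltop D R AA)"
  unfolding pow_less_le_non_def pow_less_le_def
proof (intro allI impI)
  fix Y A assume Y: "Y \<subseteq> topspace (cyltop D R AA) \<and> \<not> kmeagre kappa (cyltop D R AA) Y"
    and A: "A \<subseteq> Field lam \<and> |A| <o lam"
  show "|Func A R| \<le>o |Y|"
  proof (rule ccontr)
    assume "\<not> ?thesis"
    then have Yl: "|Y| <o |Func A R|" using ordLess_or_ordLeq[OF card_of_Well_order card_of_Well_order] by blast
    have Ys: "Y \<subseteq> Func D R" using Y topspace_cyltop[OF g] by blast
    have A1: "A \<subseteq> Field lam" "|A| <o lam" using A by auto
    have nd: "nowhere_densein (cyltop D R AA) Y" using pow_nd[OF g Ys Yl cp[OF A1]] .
    have "|{Y}| \<le>o kappa" using ordLeq_ordIso_trans[OF card_of_singl_ordLeq[OF ck(2)] card_of_Field_ordIso[OF ck(1)]] .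
    then have "kmeagre kappa (cyltop D R AA) Y" unfolding kmeagre_def using Y nd by blast
    then show False using Y by blast
  qed
qed

lemma cp_small:
  fixes lam :: "'l rel" and D :: "'d set"
  assumes lam: "Card_order lam" "infinite (Field lam)" and D: "|D| =o lam"
    and A: "|A| <o lam" and A0: "A0 \<subseteq> D" "|A0| <o lam"
  shows "\<exists>A1\<in>{A. A \<subseteq> D \<and> |A| <o lam}. \<exists>e. A0 \<subseteq> A1 \<and> inj_on e A \<and> e ` A \<subseteq> A1 - A0"
proof -
  have "|Field lam| \<le>o |D|" using ordIso_imp_ordLeq[OF ordIso_transitive[OF card_of_Field_ordIso[OF lam(1)] ordIso_symmetric[OF D]]] .
  then have iD: "infinite D" using lam(2) card_of_ordLeq_finite by blast
  have "|A0| <o |D|" using ordLess_ordIso_trans[OF A0(2) ordIso_symmetric[OF D]] .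
  then have 1: "|D| \<le>o |D - A0|" using diff_large[OF iD] by blast
  have 2: "|A| \<le>o |D|" using ordLess_imp_ordLeq[OF ordLess_ordIso_trans[OF A ordIso_symmetric[OF D]]] .
  have "|A| \<le>o |D - A0|" using ordLeq_transitive[OF 2 1] .
  then have "\<exists>e. inj_on e A \<and> e ` A \<subseteq> D - A0" by (rule card_of_ordLeq[THEN iffD2])
  then obtain e where e: "inj_on e A" "e ` A \<subseteq> D - A0" by blast
  have "|e ` A| <o lam" using ordLeq_ordLess_trans[OF card_of_image A] .
  then have "|A0 \<union> e ` A| <o lam" using un_less[OF lam A0(2)] by blast
  then show ?thesis using e A0(1) by (intro bexI[of _ "A0 \<union> e ` A"]) auto
qed

lemma cover_lemma:
  assumes Y: "Y \<subseteq> topspace T" "\<not> kmeagre kappa T Y" and B: "|B| \<le>o kappa"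
    and nd: "\<And>b. b \<in> B \<Longrightarrow> nowhere_densein T {f\<in>topspace T. b \<notin> C f}"
  shows "\<exists>f\<in>Y. B \<subseteq> C f"
proof (rule ccontr)
  assume "\<not> ?thesis"
  then have "Y \<subseteq> \<Union>((\<lambda>b. {f\<in>topspace T. b \<notin> C f}) ` B)" using Y(1) by blast
  moreover have "|(\<lambda>b. {f\<in>topspace T. b \<notin> C f}) ` B| \<le>o kappa" using ordLeq_transitive[OF card_of_image B] .
  moreover have "\<forall>S\<in>(\<lambda>b. {f\<in>topspace T. b \<notin> C f}) ` B. nowhere_densein T S" using nd by blast
  ultimately have "kmeagre kappa T Y" unfolding kmeagre_def using Y(1) by blast
  then show False using Y(2) by blast
qed

lemma cf_from_cover:
  assumes C: "\<And>f. f \<in> topspace T \<Longrightarrow> C f \<subseteq> Field mu \<and> |C f| \<le>o kappa"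
    and nd: "\<And>b. b \<in> Field mu \<Longrightarrow> nowhere_densein T {f\<in>topspace T. b \<notin> C f}"
  shows "cf_bracket_le_non mu kappa T"
  unfolding cf_bracket_le_non_def cf_bracket_le_def
proof (intro allI impI)
  fix Y assume Y: "Y \<subseteq> topspace T \<and> \<not> kmeagre kappa T Y"
  show "\<exists>F. F \<subseteq> {B. B \<subseteq> Field mu \<and> |B| \<le>o kappa} \<and>
             (\<forall>B. B \<subseteq> Field mu \<and> |B| \<le>o kappa \<longrightarrow> (\<exists>C\<in>F. B \<subseteq> C)) \<and> |F| \<le>o |Y|"
  proof (intro exI[of _ "C ` Y"] conjI allI impI)
    show "C ` Y \<subseteq> {B. B \<subseteq> Field mu \<and> |B| \<le>o kappa}" using C Y by blast
    show "|C ` Y| \<le>o |Y|" by (rule card_of_image)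
    fix B assume B: "B \<subseteq> Field mu \<and> |B| \<le>o kappa"
    have "\<exists>f\<in>Y. B \<subseteq> C f" using cover_lemma[of Y T kappa B C] Y B nd by blast
    then show "\<exists>C'\<in>C ` Y. B \<subseteq> C'" by blast
  qed
qed

context setting
begin

lemma neK: "Field kappa \<noteq> {}" using ik by auto

lemma part1a: "pow_less_le_non M kappa kappa (box_top K M kappa)"
  unfolding box_top_cyltop
proof (rule pow_le_non_gen[OF goodfam_small[OF ck ik] ck neK])
  fix A A0 assume "A \<subseteq> Field kappa" "|A| <o kappa" "A0 \<in> {A. A \<subseteq> K \<and> |A| <o kappa}"
  then have h: "|A| <o kappa" "A0 \<subseteq> K" "|A0| <o kappa" by auto
  show "\<exists>A1\<in>{A. A \<subseteq> K \<and> |A| <o kappa}. \<exists>e. A0 \<subseteq> A1 \<and> inj_on e A \<and> e ` A \<subseteq> A1 - A0"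
    by (rule cp_small[OF ck ik Kcard h])
qed

lemma part1b: "pow_less_le_non (UNIV::bool set) mu kappa (box_top M (UNIV::bool set) mu)"
  unfolding box_top_cyltop
proof (rule pow_le_non_gen[OF goodfam_small[OF cm im] ck neK])
  fix A A0 assume "A \<subseteq> Field mu" "|A| <o mu" "A0 \<in> {A. A \<subseteq> M \<and> |A| <o mu}"
  then have h: "|A| <o mu" "A0 \<subseteq> M" "|A0| <o mu" by auto
  show "\<exists>A1\<in>{A. A \<subseteq> M \<and> |A| <o mu}. \<exists>e. A0 \<subseteq> A1 \<and> inj_on e A \<and> e ` A \<subseteq> A1 - A0"
    by (rule cp_small[OF cm im Mcard h])
qed

lemma part1c2: "pow_less_le_non M mu kappa (box_top M M mu)"
  unfolding box_top_cyltop
proof (rule pow_le_non_gen[OF goodfam_small[OF cm im] ck neK])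
  fix A A0 assume "A \<subseteq> Field mu" "|A| <o mu" "A0 \<in> {A. A \<subseteq> M \<and> |A| <o mu}"
  then have h: "|A| <o mu" "A0 \<subseteq> M" "|A0| <o mu" by auto
  show "\<exists>A1\<in>{A. A \<subseteq> M \<and> |A| <o mu}. \<exists>e. A0 \<subseteq> A1 \<and> inj_on e A \<and> e ` A \<subseteq> A1 - A0"
    by (rule cp_small[OF cm im Mcard h])
qed

lemma part1c1: "pow_less_le_non M mu kappa (bd_top mu M)"
  unfolding bd_top_cyltop
proof (rule pow_le_non_gen[OF goodfam_bd ck neK])
  fix A A0 assume A: "A \<subseteq> Field mu" "|A| <o mu" and A0: "A0 \<in> {underS mu a | a. a \<in> M}"
  obtain a0 where a0: "a0 \<in> M" "A0 = underS mu a0" using A0 by blast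
  have X: "|A \<union> underS mu a0| <o mu" using un_less[OF cm im A(2) underS_less[OF a0(1)]] .
  obtain a where a: "a \<in> M" "|A \<union> underS mu a0| <o |underS mu a|" "infinite (underS mu a)"
    using lim2[OF X] by blast
  have l0: "|underS mu a0| <o |underS mu a|" using ordLeq_ordLess_trans[OF card_of_mono1 a(2)] by blast
  have sub: "underS mu a0 \<subseteq> underS mu a" using underS_mono_card[OF a0(1) a(1) l0] .
  have 1: "|underS mu a| \<le>o |underS mu a - underS mu a0|" using diff_large[OF a(3) l0] .
  have "|A| <o |underS mu a|" using ordLeq_ordLess_trans[OF card_of_mono1 a(2)] by blast
  then have "|A| \<le>o |underS mu a - underS mu a0|" using ordLeq_transitive[OF ordLess_imp_ordLeq 1] by blast
  then have "\<exists>e. inj_on e A \<and> e ` A \<subseteq> underS mu a - underS mu a0" by (rule card_of_ordLeq[THEN iffD2])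
  then obtain e where e: "inj_on e A" "e ` A \<subseteq> underS mu a - underS mu a0" by blast
  show "\<exists>A1\<in>{underS mu a | a. a \<in> M}. \<exists>e. A0 \<subseteq> A1 \<and> inj_on e A \<and> e ` A \<subseteq> A1 - A0"
    using a(1) sub e a0(2) by blast
qed

lemma surjMK: "\<exists>pr. pr ` M = K"
  using card_of_ordLeq2[OF neK, of M, THEN iffD2, OF KleM] .

lemma part2a: "non_le_non kappa (box_top K K kappa) (box_top K M kappa)"
proof -
  obtain pr where pr: "pr ` M = K" using surjMK by blast
  show ?thesis unfolding box_top_cyltop
    by (rule coord_map[OF goodfam_small[OF ck ik], of pr]) (use pr in auto)
qed

lemma part2f: "non_le_non kappa (box_top M K kappa) (box_top M M kappa)"
proof -
  obtain pr where pr: "pr ` M = K" using surjMK by blast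
  show ?thesis unfolding box_top_cyltop
    by (rule coord_map[OF goodfam_small[OF ck ik], of pr]) (use pr in auto)
qed

lemma part2d: "non_le_non kappa (box_top M (UNIV::bool set) mu) (box_top M M mu)"
proof -
  obtain m0 where m0: "m0 \<in> M" using infinite_imp_nonempty[OF im] by blast
  have "infinite (M - {m0})" using im by simp
  then obtain m1 where "m1 \<in> M - {m0}" using infinite_imp_nonempty by blast
  then have m1: "m1 \<in> M" "m1 \<noteq> m0" by auto
  have "(\<lambda>x. x = m0) ` M = UNIV"
  proof -
    have "True \<in> (\<lambda>x. x = m0) ` M" using m0 by force
    moreover have "False \<in> (\<lambda>x. x = m0) ` M" using m1 by force
    ultimately show ?thesis by (metis (full_types) UNIV_eq_I)
  qed
  then show ?thesis unfolding box_top_cyltop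
    by (intro coord_map[OF goodfam_small[OF cm im], of "\<lambda>x. x = m0"]) auto
qed

lemma injKM: "\<exists>e. inj_on e K \<and> e ` K \<subseteq> M"
  using card_of_ordLeq[of K M, THEN iffD2, OF KleM] .

lemma restr_small_a:
  assumes e: "inj_on e K" "e ` K \<subseteq> M" and A: "A \<in> {A. A \<subseteq> M \<and> |A| <o kappa}"
  shows "{i\<in>K. e i \<in> A} \<in> {A. A \<subseteq> K \<and> |A| <o kappa}"
proof -
  have "inj_on e {i\<in>K. e i \<in> A}" using e(1) by (rule inj_on_subset) blast
  moreover have "e ` {i\<in>K. e i \<in> A} \<subseteq> A" by blast
  ultimately have "\<exists>f. inj_on f {i\<in>K. e i \<in> A} \<and> f ` {i\<in>K. e i \<in> A} \<subseteq> A" by blast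
  then have "|{i\<in>K. e i \<in> A}| \<le>o |A|" by (rule card_of_ordLeq[THEN iffD1])
  moreover have "|A| <o kappa" using A by blast
  ultimately have "|{i\<in>K. e i \<in> A}| <o kappa" by (rule ordLeq_ordLess_trans)
  then show ?thesis by blast
qed

lemma restr_small_b:
  assumes e: "inj_on e K" "e ` K \<subseteq> M" and A: "A \<in> {A. A \<subseteq> M \<and> |A| <o kappa}"
    and A': "A' \<in> {A. A \<subseteq> K \<and> |A| <o kappa}"
  shows "\<exists>A''\<in>{A. A \<subseteq> M \<and> |A| <o kappa}. A \<union> e ` A' \<subseteq> A''"
proof -
  have "|A'| <o kappa" using A' by blast
  then have "|e ` A'| <o kappa" by (rule ordLeq_ordLess_trans[OF card_of_image])
  then have "|A \<union> e ` A'| <o kappa" using un_less[OF ck ik] A by blast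
  moreover have "A \<union> e ` A' \<subseteq> M" using A A' e(2) by blast
  ultimately show ?thesis by blast
qed

lemma part2c: "non_le_non kappa (box_top K M kappa) (box_top M M kappa)"
proof -
  obtain e where e: "inj_on e K" "e ` K \<subseteq> M" using injKM by blast
  show ?thesis unfolding box_top_cyltop
    by (rule restr_map[OF goodfam_small[OF ck ik] goodfam_small[OF ck ik] e])
      (use restr_small_a[OF e] restr_small_b[OF e] in auto)
qed

lemma part2e: "non_le_non kappa (box_top K K kappa) (box_top M K kappa)"
proof -
  obtain e where e: "inj_on e K" "e ` K \<subseteq> M" using injKM by blast
  show ?thesis unfolding box_top_cyltop
    by (rule restr_map[OF goodfam_small[OF ck ik] goodfam_small[OF ck ik] e])
      (use restr_small_a[OF e] restr_small_b[OF e] in auto)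
qed

lemma part2b: "non_le_non kappa (box_top K M kappa) (bd_top mu M)"
proof -
  obtain c where c: "c ` K \<subseteq> M" "inj_on c K" "\<forall>a\<in>M. |{i\<in>K. c i \<in> underS mu a}| <o kappa" using cseq by blast
  show ?thesis unfolding box_top_cyltop bd_top_cyltop
  proof (rule restr_map[OF goodfam_bd goodfam_small[OF ck ik] c(2,1)])
    fix A assume "A \<in> {underS mu a | a. a \<in> M}"
    then obtain a where a: "a \<in> M" "A = underS mu a" by blast
    then show "{i\<in>K. c i \<in> A} \<in> {A. A \<subseteq> K \<and> |A| <o kappa}" using c(3) by blast
  next
    fix A A' assume A: "A \<in> {underS mu a | a. a \<in> M}" and A': "A' \<in> {A. A \<subseteq> K \<and> |A| <o kappa}"
    obtain a where a: "a \<in> M" "A = underS mu a" using A by blast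
    have "|A'| <o kappa" using A' by blast
    then have "|c ` A'| <o kappa" by (rule ordLeq_ordLess_trans[OF card_of_image])
    moreover have "c ` A' \<subseteq> M" using A' c(1) by blast
    ultimately obtain b where b: "b \<in> M" "c ` A' \<subseteq> underS mu b" using bounded by blast
    show "\<exists>A''\<in>{underS mu a | a. a \<in> M}. A \<union> c ` A' \<subseteq> A''"
    proof (cases "(a,b) \<in> mu")
      case True
      then have "underS mu a \<subseteq> underS mu b" using underS_incl_iff[OF wo_rel.LIN[OF wom] a(1) b(1)] by blast
      then show ?thesis using a b by blast
    next
      case False
      then have "(b,a) \<in> mu" using totm a(1) b(1) by blast
      then have "underS mu b \<subseteq> underS mu a" using underS_incl_iff[OF wo_rel.LIN[OF wom] b(1) a(1)] by blast
      then show ?thesis using a b by blast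
    qed
  qed
qed

lemma part3a: "cf_bracket_le_non mu kappa (box_top K M kappa)"
proof -
  have g: "goodfam K {A. A \<subseteq> K \<and> |A| <o kappa}" using goodfam_small[OF ck ik] .
  have ts: "topspace (box_top K M kappa) = Func K M" unfolding box_top_cyltop using topspace_cyltop[OF g] .
  show ?thesis
  proof (rule cf_from_cover[where C="\<lambda>f. f ` K"])
    fix f assume "f \<in> topspace (box_top K M kappa)"
    then have f: "f \<in> Func K M" using ts by simp
    have "f ` K \<subseteq> M" using f unfolding Func_def by blast
    moreover have "|f ` K| \<le>o kappa" using ordLeq_ordIso_trans[OF card_of_image Kcard] .
    ultimately show "f ` K \<subseteq> Field mu \<and> |f ` K| \<le>o kappa" by blast
  next
    fix b assume b: "b \<in> Field mu"
    show "nowhere_densein (box_top K M kappa) {f \<in> topspace (box_top K M kappa). b \<notin> f ` K}"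
      unfolding ts unfolding box_top_cyltop
    proof (rule ND_intro_cyl[OF g])
      show "{f \<in> Func K M. b \<notin> f ` K} \<subseteq> Func K M" by blast
    next
      fix f A assume f: "f \<in> Func K M" and A: "A \<in> {A. A \<subseteq> K \<and> |A| <o kappa}"
      have "\<not> K \<subseteq> A"
      proof
        assume "K \<subseteq> A"
        then have "|K| \<le>o |A|" by (rule card_of_mono1)
        then have "kappa \<le>o |A|" using ordIso_ordLeq_trans[OF ordIso_symmetric[OF Kcard]] by blast
        then show False using A not_ordLess_ordLeq by blast
      qed
      then obtain x where x: "x \<in> K" "x \<notin> A" by blast
      define f' where "f' = f(x := b)"
      have f'F: "f' \<in> Func K M" using f x b unfolding f'_def Func_def by auto
      have f'c: "f' \<in> cyl K M A f" using f'F x(2) unfolding cyl_def f'_def by auto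
      have Ah: "|A| <o kappa" "A \<subseteq> K" using A by auto
      have "|A \<union> {x}| <o kappa" by (rule un_less[OF ck ik Ah(1) sing_less[OF ck ik]])
      then have "A \<union> {x} \<in> {A. A \<subseteq> K \<and> |A| <o kappa}" using Ah(2) x(1) by blast
      moreover have "cyl K M (A \<union> {x}) f' \<inter> {f \<in> Func K M. b \<notin> f ` K} = {}"
      proof -
        have "b \<in> g ` K" if "g \<in> cyl K M (A \<union> {x}) f'" for g
        proof -
          have "g x = f' x" using that unfolding cyl_def by blast
          then have "g x = b" unfolding f'_def by simp
          then show ?thesis using x(1) by blast
        qed
        then show ?thesis by blast
      qed
      ultimately show "\<exists>f'\<in>cyl K M A f. \<exists>A'\<in>{A. A \<subseteq> K \<and> |A| <o kappa}. A \<subseteq> A' \<and> cyl K M A' f' \<inter> {f \<in> Func K M. b \<notin> f ` K} = {}"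
        using f'c by blast
    qed
  qed
qed

end

context setting
begin

lemma part3b: "cf_bracket_le_non mu kappa (box_top M (UNIV::bool set) mu)"
proof -
  have g: "goodfam M {A. A \<subseteq> M \<and> |A| <o mu}" using goodfam_small[OF cm im] .
  have ts: "topspace (box_top M (UNIV::bool set) mu) = Func M UNIV"
    unfolding box_top_cyltop using topspace_cyltop[OF g] .
  obtain K0 where K0: "K0 \<subseteq> M" "cofinal K0 mu" "|K0| =o kappa" using K0_ex by (elim exE conjE)
  have "|M \<times> M| \<le>o |M|" using ordIso_imp_ordLeq[OF card_of_Times_same_infinite[OF im]] .
  then have "\<exists>q. inj_on q (M \<times> M) \<and> q ` (M \<times> M) \<subseteq> M" by (rule card_of_ordLeq[THEN iffD2])
  then obtain q where q: "inj_on q (M \<times> M)" "q ` (M \<times> M) \<subseteq> M" by blast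
  define P3 :: "'m \<times> 'm \<times> 'm \<Rightarrow> 'm" where "P3 = (\<lambda>(k, c, x). q (k, q (c, x)))"
  have P3M: "P3 (k,c,x) \<in> M" if "k \<in> M" "c \<in> M" "x \<in> M" for k c x
  proof -
    have "q (c,x) \<in> M" using q(2) that(2,3) by blast
    then show ?thesis using q(2) that(1) unfolding P3_def by auto
  qed
  have P3inj: "k = k' \<and> c = c' \<and> x = x'"
    if e: "P3 (k,c,x) = P3 (k',c',x')" and m: "k \<in> M" "c \<in> M" "x \<in> M" "k' \<in> M" "c' \<in> M" "x' \<in> M"
    for k c x k' c' x'
  proof -
    have i1: "q (c,x) \<in> M" "q (c',x') \<in> M" using q(2) m by blast+
    have "q (k, q (c,x)) = q (k', q (c',x'))" using e unfolding P3_def by simp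
    then have "(k, q (c,x)) = (k', q (c',x'))" using inj_onD[OF q(1)] i1 m by blast
    then have kk: "k = k'" and "q (c,x) = q (c',x')" by auto
    then have "(c,x) = (c',x')" using inj_onD[OF q(1)] m by blast
    then show ?thesis using kk by auto
  qed
  have P3inj_on: "inj_on P3 (M \<times> M \<times> M)"
  proof (rule inj_onI)
    fix s t assume st: "s \<in> M \<times> M \<times> M" "t \<in> M \<times> M \<times> M" "P3 s = P3 t"
    obtain k c x where s: "s = (k,c,x)" by (cases s) auto
    obtain k' c' x' where t: "t = (k',c',x')" by (cases t) auto
    show "s = t" using P3inj[of k c x k' c' x'] st s t by auto
  qed
  define codes :: "('m \<Rightarrow> bool) \<Rightarrow> 'm \<Rightarrow> 'm \<Rightarrow> 'm \<Rightarrow> bool"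
    where "codes = (\<lambda>f k c b. f (P3 (k,c,b)) \<and> (\<forall>y\<in>underS mu b. \<not> f (P3 (k,c,y))))"
  define gd :: "('m \<Rightarrow> bool) \<Rightarrow> 'm \<Rightarrow> 'm \<Rightarrow> bool"
    where "gd = (\<lambda>f k b. infinite (underS mu k) \<and> |{c\<in>underS mu k. \<not> codes f k c b}| <o |underS mu k| )"
  define C :: "('m \<Rightarrow> bool) \<Rightarrow> 'm set" where "C = (\<lambda>f. {b\<in>M. \<exists>k\<in>K0. gd f k b})"
  have uniq: "b = b'" if bb: "b \<in> M" "b' \<in> M" "gd f k b" "gd f k b'" for f k b b'
  proof (rule ccontr)
    assume ne: "b \<noteq> b'"
    let ?E1 = "{c\<in>underS mu k. \<not> codes f k c b}"
    let ?E2 = "{c\<in>underS mu k. \<not> codes f k c b'}"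
    have cover: "underS mu k \<subseteq> ?E1 \<union> ?E2"
    proof
      fix c assume c: "c \<in> underS mu k"
      show "c \<in> ?E1 \<union> ?E2"
      proof (rule ccontr)
        assume "\<not> ?thesis"
        then have cb: "codes f k c b" "codes f k c b'" using c by auto
        from totm[OF bb(1,2)] show False
        proof
          assume "(b,b') \<in> mu"
          then have "b \<in> underS mu b'" using ne unfolding underS_def by blast
          then show False using cb unfolding codes_def by auto
        next
          assume "(b',b) \<in> mu"
          then have "b' \<in> underS mu b" using ne unfolding underS_def by blast
          then show False using cb unfolding codes_def by auto
        qed
      qed
    qed
    have inf: "infinite (underS mu k)" using bb(3) unfolding gd_def by blast
    have l1: "|?E1| <o |underS mu k|" using bb(3) unfolding gd_def by blast
    have l2: "|?E2| <o |underS mu k|" using bb(4) unfolding gd_def by blast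
    have "|?E1 \<union> ?E2| <o |underS mu k|" using card_of_Un_ordLess_infinite[OF inf l1 l2] .
    moreover have "|underS mu k| \<le>o |?E1 \<union> ?E2|" using card_of_mono1[OF cover] .
    ultimately show False using not_ordLess_ordLeq by blast
  qed
  have Csub: "C f \<subseteq> M" for f unfolding C_def by blast
  have Ccard: "|C f| \<le>o kappa" for f
  proof -
    define sel where "sel = (\<lambda>k. SOME b. b \<in> M \<and> gd f k b)"
    have "C f \<subseteq> sel ` K0"
    proof
      fix b assume "b \<in> C f"
      then obtain k where k: "k \<in> K0" "b \<in> M" "gd f k b" unfolding C_def by blast
      have "sel k \<in> M \<and> gd f k (sel k)" unfolding sel_def using someI[of "\<lambda>b. b \<in> M \<and> gd f k b" b] k(2,3) by blast
      then have "sel k = b" using uniq[of "sel k" b f k] k(2,3) by blast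
      then show "b \<in> sel ` K0" using k(1) by blast
    qed
    then have "|C f| \<le>o |K0|" by (rule ordLeq_transitive[OF card_of_mono1 card_of_image])
    then show ?thesis by (rule ordLeq_ordIso_trans[OF _ K0(3)])
  qed
  show ?thesis
  proof (rule cf_from_cover[where C=C])
    fix f assume "f \<in> topspace (box_top M (UNIV::bool set) mu)"
    show "C f \<subseteq> Field mu \<and> |C f| \<le>o kappa" using Csub Ccard by blast
  next
    fix b assume b: "b \<in> Field mu"
    show "nowhere_densein (box_top M (UNIV::bool set) mu) {f \<in> topspace (box_top M (UNIV::bool set) mu). b \<notin> C f}"
      unfolding ts unfolding box_top_cyltop
    proof (rule ND_intro_cyl[OF g])
      show "{f \<in> Func M UNIV. b \<notin> C f} \<subseteq> Func M UNIV" by blast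
    next
      fix f :: "'m \<Rightarrow> bool" and A assume f: "f \<in> Func M UNIV" and A: "A \<in> {A. A \<subseteq> M \<and> |A| <o mu}"
      have Ah: "A \<subseteq> M" "|A| <o mu" using A by auto
      obtain a where a: "a \<in> M" "|A| <o |underS mu a|" "infinite (underS mu a)" using lim2[OF Ah(2)] by blast
      obtain k where k: "k \<in> K0" "a \<noteq> k" "(a,k) \<in> mu" using K0(2) a(1) unfolding cofinal_def by blast
      have kM: "k \<in> M" using k(1) K0(1) by blast
      have ak: "underS mu a \<subseteq> underS mu k" using underS_incl_iff[OF wo_rel.LIN[OF wom] a(1) kM] k(3) by simp
      have kA1: "|A| <o |underS mu k|" using ordLess_ordLeq_trans[OF a(2) card_of_mono1[OF ak]] .
      have kA2: "infinite (underS mu k)" using a(3) ak finite_subset by blast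
      have ukM: "underS mu k \<subseteq> M" using underS_Field[of _ mu k] by blast
      have bM: "b \<in> M" using b .
      define T where "T = {c\<in>underS mu k. \<exists>x\<in>M. P3 (k,c,x) \<in> A}"
      have Tsub: "T \<subseteq> (\<lambda>y. fst (snd (inv_into (M \<times> M \<times> M) P3 y))) ` A"
      proof
        fix c assume "c \<in> T"
        then obtain x where x: "c \<in> underS mu k" "x \<in> M" "P3 (k,c,x) \<in> A" unfolding T_def by blast
        have cM: "c \<in> M" using x(1) ukM by blast
        have "inv_into (M \<times> M \<times> M) P3 (P3 (k,c,x)) = (k,c,x)"
          using inv_into_f_f[OF P3inj_on] kM cM x(2) by auto
        then show "c \<in> (\<lambda>y. fst (snd (inv_into (M \<times> M \<times> M) P3 y))) ` A"
          by (intro image_eqI[OF _ x(3)]) simp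
      qed
      have Tcard: "|T| <o |underS mu k|"
        using ordLeq_ordLess_trans[OF ordLeq_transitive[OF card_of_mono1[OF Tsub] card_of_image] kA1] .
      define Bb where "Bb = insert b (underS mu b)"
      define Z where "Z = P3 ` ({k} \<times> (underS mu k - T) \<times> Bb)"
      define Zb where "Zb = P3 ` ({k} \<times> (underS mu k - T) \<times> {b})"
      define f' where "f' = (\<lambda>y. if y \<in> Z then y \<in> Zb else f y)"
      have BbM: "Bb \<subseteq> M" using bM underS_Field[of _ mu b] unfolding Bb_def by blast
      have ZM: "Z \<subseteq> M" unfolding Z_def
      proof (rule image_subsetI)
        fix t assume t: "t \<in> {k} \<times> (underS mu k - T) \<times> Bb"
        then obtain c x where cx: "t = (k,c,x)" "c \<in> underS mu k" "x \<in> Bb" by auto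
        show "P3 t \<in> M" using P3M[OF kM _ _] cx ukM BbM by blast
      qed
      have f'F: "f' \<in> Func M UNIV"
        using f ZM unfolding Func_def f'_def by auto
      have ZA: "Z \<inter> A = {}"
      proof (rule ccontr)
        assume "Z \<inter> A \<noteq> {}"
        then obtain t where t: "t \<in> {k} \<times> (underS mu k - T) \<times> Bb" "P3 t \<in> A" unfolding Z_def by blast
        then obtain c x where cx: "t = (k,c,x)" "c \<in> underS mu k" "c \<notin> T" "x \<in> Bb" by auto
        have "c \<in> T" unfolding T_def using cx t(2) BbM by blast
        then show False using cx(3) by blast
      qed
      have f'c: "f' \<in> cyl M UNIV A f" using f'F ZA unfolding cyl_def f'_def by auto
      have Zcard: "|Z| <o mu"
      proof -
        have 1: "|{k}| <o mu" by (rule sing_less[OF cm im])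
        have 2: "|underS mu k - T| <o mu" using ordLeq_ordLess_trans[OF card_of_mono1 underS_less[OF kM]] by blast
        have 3: "|Bb| <o mu" unfolding Bb_def using un_less[OF cm im sing_less[OF cm im] underS_less[OF bM]] by simp
        have "|{k} \<times> (underS mu k - T) \<times> Bb| <o mu" by (rule times_less[OF cm im 1 times_less[OF cm im 2 3]])
        then show ?thesis unfolding Z_def by (rule ordLeq_ordLess_trans[OF card_of_image])
      qed
      have A'in: "A \<union> Z \<in> {A. A \<subseteq> M \<and> |A| <o mu}"
        using un_less[OF cm im Ah(2) Zcard] Ah(1) ZM by blast
      have disj: "cyl M UNIV (A \<union> Z) f' \<inter> {f \<in> Func M UNIV. b \<notin> C f} = {}"
      proof -
        have "b \<in> C g" if g: "g \<in> cyl M UNIV (A \<union> Z) f'" for g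
        proof -
          have gz: "g y = f' y" if "y \<in> Z" for y using g that unfolding cyl_def by blast
          have E: "{c\<in>underS mu k. \<not> codes g k c b} \<subseteq> T"
          proof
            fix c assume c: "c \<in> {c\<in>underS mu k. \<not> codes g k c b}"
            show "c \<in> T"
            proof (rule ccontr)
              assume cT: "c \<notin> T"
              have cu: "c \<in> underS mu k" using c by blast
              have cM: "c \<in> M" using cu ukM by blast
              have z1: "P3 (k,c,b) \<in> Z" unfolding Z_def by (rule imageI) (use cu cT in \<open>auto simp: Bb_def\<close>)
              have z2: "P3 (k,c,b) \<in> Zb" unfolding Zb_def by (rule imageI) (use cu cT in auto)
              have "g (P3 (k,c,b))" using gz[OF z1] z1 z2 unfolding f'_def by simp
              moreover have "\<not> g (P3 (k,c,y))" if y: "y \<in> underS mu b" for y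
              proof -
                have yM: "y \<in> M" using y underS_Field[of _ mu b] by blast
                have z3: "P3 (k,c,y) \<in> Z" unfolding Z_def by (rule imageI) (use cu cT y in \<open>auto simp: Bb_def\<close>)
                have z4: "P3 (k,c,y) \<notin> Zb"
                proof
                  assume "P3 (k,c,y) \<in> Zb"
                  then obtain c' where c': "c' \<in> underS mu k" "P3 (k,c,y) = P3 (k,c',b)" unfolding Zb_def by auto
                  have "c' \<in> M" using c'(1) ukM by blast
                  then have "y = b" using P3inj[OF c'(2) kM cM yM kM _ bM] by blast
                  then show False using y unfolding underS_def by blast
                qed
                show ?thesis using gz[OF z3] z3 z4 unfolding f'_def by simp
              qed
              ultimately have "codes g k c b" unfolding codes_def by simp
              then show False using c by blast
            qed
          qed
          have "|{c\<in>underS mu k. \<not> codes g k c b}| <o |underS mu k|"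
            using ordLeq_ordLess_trans[OF card_of_mono1[OF E] Tcard] .
          then have "gd g k b" unfolding gd_def using kA2 by blast
          then show "b \<in> C g" unfolding C_def using bM k(1) by blast
        qed
        then show ?thesis by blast
      qed
      show "\<exists>f'\<in>cyl M UNIV A f. \<exists>A'\<in>{A. A \<subseteq> M \<and> |A| <o mu}. A \<subseteq> A' \<and> cyl M UNIV A' f' \<inter> {f \<in> Func M UNIV. b \<notin> C f} = {}"
        using f'c A'in disj by blast
    qed
  qed
qed

end

theorem mainTheorem11:
  fixes kappa :: "'k rel" and mu :: "'m rel"
  assumes "Card_order kappa" and "infinite (Field kappa)" and "regularCard kappa"
    and "Card_order mu" and "\<not> regularCard mu" and "cofinality_is mu kappa"
  defines "K \<equiv> Field kappa" and "M \<equiv> Field mu" and "Two \<equiv> (UNIV :: bool set)"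
  shows
    \<comment> \<open>(1a)\<close>
    "pow_less_le_non M kappa kappa (box_top K M kappa)
     \<comment> \<open>(1b)\<close>
     \<and> pow_less_le_non Two mu kappa (box_top M Two mu)
     \<comment> \<open>(1c)\<close>
     \<and> pow_less_le_non M mu kappa (bd_top mu M)
     \<and> pow_less_le_non M mu kappa (box_top M M mu)
     \<comment> \<open>(2a)\<close>
     \<and> non_le_non kappa (box_top K K kappa) (box_top K M kappa)
     \<comment> \<open>(2b)\<close>
     \<and> non_le_non kappa (box_top K M kappa) (bd_top mu M)
     \<comment> \<open>(2c)\<close>
     \<and> non_le_non kappa (box_top K M kappa) (box_top M M kappa)
     \<comment> \<open>(2d)\<close>
     \<and> non_le_non kappa (box_top M Two mu) (box_top M M mu)
     \<comment> \<open>(2e)\<close>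
     \<and> non_le_non kappa (box_top K K kappa) (box_top M K kappa)
     \<comment> \<open>(2f)\<close>
     \<and> non_le_non kappa (box_top M K kappa) (box_top M M kappa)
     \<comment> \<open>(3)\<close>
     \<and> cf_bracket_le_non mu kappa (box_top K M kappa)
     \<and> cf_bracket_le_non mu kappa (box_top M Two mu)"
proof -
  interpret setting kappa mu using assms(1,2,4,5,6) by unfold_locales
  show ?thesis unfolding K_def M_def Two_def
    by (intro conjI part1a part1b part1c1 part1c2 part2a part2b part2c part2d part2e part2f part3a part3b)
qed

end
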